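(* Let $f_i$ and $f_j$ be finite set densities on finite subsets of $\mathbb{R}^d$ with cardinality pmfs $p_i,p_j$ and localisation densities $\rho_{i,n},\rho_{j,n}$, let $\omega\in[0,1]$, and let $f_\omega$, $\tilde f_\omega$, $\tilde p_\omega$, $z_\omega(n)$ be as in the context. Let $X=\{x_1,\ldots,x_n\}$ be a finite subset of $\mathbb{R}^d$ with $f_\omega(X)>0$ and $z_\omega(n)>0$. Then $\tilde f_\omega$ is pointwise inconsistent at $X$, i.e. $$\tilde f_\omega(X)<\min\{f_i(X),f_j(X)\},$$ if $$\frac{E_{\tilde p_\omega}\{z_\omega(n)\}}{z_\omega(n)}<\frac{\min\{f_i(X),f_j(X)\}}{f_\omega(X)},$$ where $E_{\tilde p_\omega}\{z_\omega(n)\}=\sum_{n'=0}^\infty\tilde p_\omega(n')z_\omega(n')$; moreover, $\frac{\min\{f_i(X),f_j(X)\}}{f_\omega(X)}\le1$.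
   Context: A finite set density is written $f(\{x_1,\ldots,x_n\})=p(n)\,n!\,\rho_n(x_1,\ldots,x_n)$ with $p$ a pmf on $\{0,1,\ldots\}$ and $\rho_n$ a symmetric probability density on $(\mathbb{R}^d)^n$. For $\omega\in[0,1]$ define $z_\omega(0)=1$, $z_\omega(n)=\int\rho_{i,n}^{1-\omega}\rho_{j,n}^{\omega}\,\mathrm{d}x_1\cdots\mathrm{d}x_n$, $\rho_{\omega,n}=\rho_{i,n}^{1-\omega}\rho_{j,n}^{\omega}/z_\omega(n)$, $N_\omega=\sum_{n'}p_i^{1-\omega}(n')p_j^{\omega}(n')z_\omega(n')$, $p_\omega(n)=p_i^{1-\omega}(n)p_j^{\omega}(n)z_\omega(n)/N_\omega$. The finite set exponential mixture density is $f_\omega(X)=p_\omega(n)\,n!\,\rho_{\omega,n}(x_1,\ldots,x_n)$. Define $\tilde N_\omega=\sum_{n'}p_i^{1-\omega}(n')p_j^{\omega}(n')$, $\tilde p_\omega(n)=p_i^{1-\omega}(n)p_j^{\omega}(n)/\tilde N_\omega$ (the exponential mixture of the cardinality pmfs), and the decoupled fused density $\tilde f_\omega(X)=\tilde p_\omega(n)\,n!\,\rho_{\omega,n}(x_1,\ldots,x_n)$, where $n=|X|$. *)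

theory Defs
  imports "HOL-Probability.Probability"
begin

text \<open>Real power with the convention 0^0 = 1 (so that the exponential mixture
  at omega = 0 or 1 reproduces f_i resp. f_j).\<close>
definition pw :: "real \<Rightarrow> real \<Rightarrow> real" where
  "pw x a = (if a = 0 then 1 else x powr a)"

abbreviation tuple_measure :: "nat \<Rightarrow> (nat \<Rightarrow> 'a::euclidean_space) measure" where
  "tuple_measure n \<equiv> PiM {..<n} (\<lambda>_. lborel)"

definition loc_densities :: "(nat \<Rightarrow> (nat \<Rightarrow> 'a::euclidean_space) \<Rightarrow> real) \<Rightarrow> bool" where
  "loc_densities \<rho> \<longleftrightarrow> (\<forall>n.
      \<rho> n \<in> borel_measurable (tuple_measure n)
    \<and> (\<forall>x \<in> space (tuple_measure n). 0 \<le> \<rho> n x)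
    \<and> integrable (tuple_measure n) (\<rho> n)
    \<and> integral\<^sup>L (tuple_measure n) (\<rho> n) = 1
    \<and> (\<forall>\<sigma> x. \<sigma> permutes {..<n} \<longrightarrow> x \<in> space (tuple_measure n) \<longrightarrow>
          \<rho> n (restrict (x \<circ> \<sigma>) {..<n}) = \<rho> n x))"

text \<open>Finite set density f({x_1..x_n}) = p(n) n! rho_n(x_1..x_n).\<close>
definition fsd :: "nat pmf \<Rightarrow> (nat \<Rightarrow> (nat \<Rightarrow> 'a) \<Rightarrow> real) \<Rightarrow> nat \<Rightarrow> (nat \<Rightarrow> 'a) \<Rightarrow> real" where
  "fsd p \<rho> n x = pmf p n * fact n * \<rho> n x"

definition z_om :: "real \<Rightarrow> (nat \<Rightarrow> (nat \<Rightarrow> 'a::euclidean_space) \<Rightarrow> real)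
    \<Rightarrow> (nat \<Rightarrow> (nat \<Rightarrow> 'a) \<Rightarrow> real) \<Rightarrow> nat \<Rightarrow> real" where
  "z_om \<omega> \<rho>i \<rho>j n = (if n = 0 then 1 else
     integral\<^sup>L (tuple_measure n) (\<lambda>x. pw (\<rho>i n x) (1 - \<omega>) * pw (\<rho>j n x) \<omega>))"

definition rho_om :: "real \<Rightarrow> (nat \<Rightarrow> (nat \<Rightarrow> 'a::euclidean_space) \<Rightarrow> real)
    \<Rightarrow> (nat \<Rightarrow> (nat \<Rightarrow> 'a) \<Rightarrow> real) \<Rightarrow> nat \<Rightarrow> (nat \<Rightarrow> 'a) \<Rightarrow> real" where
  "rho_om \<omega> \<rho>i \<rho>j n x = pw (\<rho>i n x) (1 - \<omega>) * pw (\<rho>j n x) \<omega> / z_om \<omega> \<rho>i \<rho>j n"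

definition N_om :: "real \<Rightarrow> nat pmf \<Rightarrow> nat pmf \<Rightarrow> (nat \<Rightarrow> (nat \<Rightarrow> 'a::euclidean_space) \<Rightarrow> real)
    \<Rightarrow> (nat \<Rightarrow> (nat \<Rightarrow> 'a) \<Rightarrow> real) \<Rightarrow> real" where
  "N_om \<omega> pI pJ \<rho>i \<rho>j =
     (\<Sum>n'. pw (pmf pI n') (1 - \<omega>) * pw (pmf pJ n') \<omega> * z_om \<omega> \<rho>i \<rho>j n')"

definition p_om :: "real \<Rightarrow> nat pmf \<Rightarrow> nat pmf \<Rightarrow> (nat \<Rightarrow> (nat \<Rightarrow> 'a::euclidean_space) \<Rightarrow> real)
    \<Rightarrow> (nat \<Rightarrow> (nat \<Rightarrow> 'a) \<Rightarrow> real) \<Rightarrow> nat \<Rightarrow> real" where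
  "p_om \<omega> pI pJ \<rho>i \<rho>j n =
     pw (pmf pI n) (1 - \<omega>) * pw (pmf pJ n) \<omega> * z_om \<omega> \<rho>i \<rho>j n / N_om \<omega> pI pJ \<rho>i \<rho>j"

definition f_om :: "real \<Rightarrow> nat pmf \<Rightarrow> nat pmf \<Rightarrow> (nat \<Rightarrow> (nat \<Rightarrow> 'a::euclidean_space) \<Rightarrow> real)
    \<Rightarrow> (nat \<Rightarrow> (nat \<Rightarrow> 'a) \<Rightarrow> real) \<Rightarrow> nat \<Rightarrow> (nat \<Rightarrow> 'a) \<Rightarrow> real" where
  "f_om \<omega> pI pJ \<rho>i \<rho>j n x = p_om \<omega> pI pJ \<rho>i \<rho>j n * fact n * rho_om \<omega> \<rho>i \<rho>j n x"

definition Nt_om :: "real \<Rightarrow> nat pmf \<Rightarrow> nat pmf \<Rightarrow> real" where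
  "Nt_om \<omega> pI pJ = (\<Sum>n'. pw (pmf pI n') (1 - \<omega>) * pw (pmf pJ n') \<omega>)"

definition pt_om :: "real \<Rightarrow> nat pmf \<Rightarrow> nat pmf \<Rightarrow> nat \<Rightarrow> real" where
  "pt_om \<omega> pI pJ n = pw (pmf pI n) (1 - \<omega>) * pw (pmf pJ n) \<omega> / Nt_om \<omega> pI pJ"

definition ft_om :: "real \<Rightarrow> nat pmf \<Rightarrow> nat pmf \<Rightarrow> (nat \<Rightarrow> (nat \<Rightarrow> 'a::euclidean_space) \<Rightarrow> real)
    \<Rightarrow> (nat \<Rightarrow> (nat \<Rightarrow> 'a) \<Rightarrow> real) \<Rightarrow> nat \<Rightarrow> (nat \<Rightarrow> 'a) \<Rightarrow> real" where
  "ft_om \<omega> pI pJ \<rho>i \<rho>j n x = pt_om \<omega> pI pJ n * fact n * rho_om \<omega> \<rho>i \<rho>j n x"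

end

theory Submission
  imports Defs
begin

lemma pmf_sums_one: "(\<lambda>n. pmf (p::nat pmf) n) sums 1"
proof -
  have "pmf p sums infsetsum (pmf p) UNIV"
    by (rule sums_infsetsum_nat'[OF pmf_abs_summable])
  thus ?thesis by (simp add: infsetsum_pmf_eq_1)
qed

lemma pw_nonneg: "0 \<le> pw u a"
  by (simp add: pw_def)

lemma pw_young:
  fixes u v \<omega> :: real
  assumes "0 \<le> u" "0 \<le> v" "0 \<le> \<omega>" "\<omega> \<le> 1"
  shows "pw u (1 - \<omega>) * pw v \<omega> \<le> (1 - \<omega>) * u + \<omega> * v"
proof (cases "\<omega> = 0 \<or> \<omega> = 1")
  case True
  then show ?thesis using assms by (auto simp: pw_def)
next
  case False
  hence w: "0 < \<omega>" "\<omega> < 1" using assms by auto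
  show ?thesis
  proof (cases "u = 0 \<or> v = 0")
    case True
    then show ?thesis using assms w by (auto simp: pw_def)
  next
    case False
    then show ?thesis using assms w Youngs_inequality_0[of "1 - \<omega>" \<omega> u v]
      by (auto simp: pw_def)
  qed
qed

lemma pw_min:
  fixes u v \<omega> :: real
  assumes "0 \<le> u" "0 \<le> v" "0 \<le> \<omega>" "\<omega> \<le> 1"
  shows "min u v \<le> pw u (1 - \<omega>) * pw v \<omega>"
proof (cases "\<omega> = 0 \<or> \<omega> = 1")
  case True
  then show ?thesis using assms by (auto simp: pw_def)
next
  case False
  hence w: "0 < \<omega>" "\<omega> < 1" using assms by auto
  define m where "m = min u v"
  have m: "0 \<le> m" "m \<le> u" "m \<le> v" using assms by (auto simp: m_def)
  have "m = m powr (1 - \<omega>) * m powr \<omega>"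
  proof (cases "m = 0")
    case True thus ?thesis by simp
  next
    case False thus ?thesis using m by (simp flip: powr_add)
  qed
  also have "\<dots> \<le> u powr (1 - \<omega>) * v powr \<omega>"
    using m w by (intro mult_mono powr_mono2) auto
  finally show ?thesis using w by (simp add: pw_def m_def)
qed

lemma pw_mult:
  fixes u v a :: real
  assumes "0 \<le> u" "0 \<le> v"
  shows "pw (u * v) a = pw u a * pw v a"
  using assms by (simp add: pw_def powr_mult)

lemma z_bounds:
  assumes "loc_densities \<rho>i" "loc_densities \<rho>j" "0 \<le> \<omega>" "\<omega> \<le> 1"
  shows "0 \<le> z_om \<omega> \<rho>i \<rho>j n \<and> z_om \<omega> \<rho>i \<rho>j n \<le> 1"
proof (cases "n = 0")
  case True then show ?thesis by (simp add: z_om_def)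
next
  case False
  define g where "g = (\<lambda>x. pw (\<rho>i n x) (1 - \<omega>) * pw (\<rho>j n x) \<omega>)"
  have z: "z_om \<omega> \<rho>i \<rho>j n = integral\<^sup>L (tuple_measure n) g"
    using False by (simp add: z_om_def g_def)
  have di: "\<rho>i n \<in> borel_measurable (tuple_measure n)" "\<forall>x \<in> space (tuple_measure n). 0 \<le> \<rho>i n x"
     "integrable (tuple_measure n) (\<rho>i n)" "integral\<^sup>L (tuple_measure n) (\<rho>i n) = 1"
    using assms(1) unfolding loc_densities_def by blast+
  have dj: "\<rho>j n \<in> borel_measurable (tuple_measure n)" "\<forall>x \<in> space (tuple_measure n). 0 \<le> \<rho>j n x"
     "integrable (tuple_measure n) (\<rho>j n)" "integral\<^sup>L (tuple_measure n) (\<rho>j n) = 1"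
    using assms(2) unfolding loc_densities_def by blast+
  have nn: "0 \<le> integral\<^sup>L (tuple_measure n) g"
    by (rule Bochner_Integration.integral_nonneg) (simp add: g_def pw_nonneg)
  have le: "integral\<^sup>L (tuple_measure n) g \<le> 1"
  proof (cases "integrable (tuple_measure n) g")
    case True
    have "integral\<^sup>L (tuple_measure n) g
        \<le> integral\<^sup>L (tuple_measure n) (\<lambda>x. (1 - \<omega>) * \<rho>i n x + \<omega> * \<rho>j n x)"
      using True di dj assms(3,4)
      by (intro integral_mono) (auto simp: g_def intro!: pw_young)
    also have "\<dots> = (1 - \<omega>) * 1 + \<omega> * 1"
      using di dj by simp
    finally show ?thesis by simp
  next
    case False
    then show ?thesis by (simp add: not_integrable_integral_eq)
  qed
  show ?thesis using z nn le by simp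
qed

theorem proposition3:
  fixes pI pJ :: "nat pmf"
    and \<rho>i \<rho>j :: "nat \<Rightarrow> (nat \<Rightarrow> 'a::euclidean_space) \<Rightarrow> real"
    and \<omega> :: real and n :: nat and x :: "nat \<Rightarrow> 'a"
  assumes "loc_densities \<rho>i" and "loc_densities \<rho>j"
    and "0 \<le> \<omega>" and "\<omega> \<le> 1"
    and "x \<in> {..<n} \<rightarrow>\<^sub>E UNIV" and "inj_on x {..<n}"
    and "f_om \<omega> pI pJ \<rho>i \<rho>j n x > 0"
    and "z_om \<omega> \<rho>i \<rho>j n > 0"
  shows "((\<Sum>n'. pt_om \<omega> pI pJ n' * z_om \<omega> \<rho>i \<rho>j n') / z_om \<omega> \<rho>i \<rho>j n
            < min (fsd pI \<rho>i n x) (fsd pJ \<rho>j n x) / f_om \<omega> pI pJ \<rho>i \<rho>j n x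
         \<longrightarrow> ft_om \<omega> pI pJ \<rho>i \<rho>j n x < min (fsd pI \<rho>i n x) (fsd pJ \<rho>j n x))
       \<and> min (fsd pI \<rho>i n x) (fsd pJ \<rho>j n x) / f_om \<omega> pI pJ \<rho>i \<rho>j n x \<le> 1"
proof -
  define a where "a = (\<lambda>k. pw (pmf pI k) (1 - \<omega>) * pw (pmf pJ k) \<omega>)"
  define z where "z = z_om \<omega> \<rho>i \<rho>j"
  define N where "N = N_om \<omega> pI pJ \<rho>i \<rho>j"
  define Nt where "Nt = Nt_om \<omega> pI pJ"
  define b where "b = pw (\<rho>i n x) (1 - \<omega>) * pw (\<rho>j n x) \<omega>"
  have zb: "\<And>k. 0 \<le> z k \<and> z k \<le> 1" unfolding z_def by (rule z_bounds[OF assms(1-4)])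
  have a0: "\<And>k. 0 \<le> a k" by (simp add: a_def pw_nonneg)
  have aY: "\<And>k. a k \<le> (1 - \<omega>) * pmf pI k + \<omega> * pmf pJ k"
    unfolding a_def using assms(3,4) by (intro pw_young) auto
  have sY: "(\<lambda>k. (1 - \<omega>) * pmf pI k + \<omega> * pmf pJ k) sums ((1 - \<omega>) * 1 + \<omega> * 1)"
    by (intro sums_add sums_mult pmf_sums_one)
  have sY': "summable (\<lambda>k. (1 - \<omega>) * pmf pI k + \<omega> * pmf pJ k)" using sY by (rule sums_summable)
  have suma: "summable a"
  proof (rule summable_comparison_test'[OF sY', where N=0])
    fix k :: nat assume "k \<ge> 0"
    show "norm (a k) \<le> (1 - \<omega>) * pmf pI k + \<omega> * pmf pJ k" using a0[of k] aY[of k] by simp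
  qed

  have sumaz: "summable (\<lambda>k. a k * z k)"
  proof (rule summable_comparison_test'[OF suma, where N=0])
    fix k :: nat assume "k \<ge> 0"
    have "a k * z k \<le> a k" using a0[of k] zb[of k] by (simp add: mult_left_le)
    thus "norm (a k * z k) \<le> a k" using a0[of k] zb[of k] by simp
  qed
  have N_eq: "N = (\<Sum>k. a k * z k)" by (simp add: N_def N_om_def a_def z_def)
  have Nt_eq: "Nt = (\<Sum>k. a k)" by (simp add: Nt_def Nt_om_def a_def)
  have N_le_Nt: "N \<le> Nt" unfolding N_eq Nt_eq
  proof (rule suminf_le[OF _ sumaz suma])
    fix k show "a k * z k \<le> a k" using a0[of k] zb[of k] by (simp add: mult_left_le)
  qed
  have Nt_le: "Nt \<le> 1" unfolding Nt_eq
    using suminf_le[OF aY suma sY'] sY by (simp add: sums_iff)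
  have N0: "0 \<le> N" unfolding N_eq using sumaz a0 zb by (intro suminf_nonneg) (auto intro: mult_nonneg_nonneg)
  have sp: "x \<in> space (tuple_measure n)" using assms(5) by (simp add: space_PiM)
  have ri: "0 \<le> \<rho>i n x" using assms(1) sp unfolding loc_densities_def by blast
  have rj: "0 \<le> \<rho>j n x" using assms(2) sp unfolding loc_densities_def by blast
  have zn: "z n > 0" using assms(8) by (simp add: z_def)
  have f_eq: "f_om \<omega> pI pJ \<rho>i \<rho>j n x = a n * z n / N * fact n * (b / z n)"
    by (simp add: f_om_def p_om_def rho_om_def a_def z_def N_def b_def)
  have Npos: "N > 0"
  proof (rule ccontr)
    assume "\<not> N > 0" hence "N = 0" using N0 by simp
    thus False using assms(7) f_eq by simp
  qed
  have f_eq2: "f_om \<omega> pI pJ \<rho>i \<rho>j n x = a n * b * fact n / N"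
    using f_eq zn by (simp add: field_simps)
  have ft_eq: "ft_om \<omega> pI pJ \<rho>i \<rho>j n x = a n * b * fact n / (Nt * z n)"
    using zn by (simp add: ft_om_def pt_om_def rho_om_def a_def z_def Nt_def b_def field_simps)
  have Ntpos: "Nt > 0" using N_le_Nt Npos by simp
  have E_eq: "(\<Sum>n'. pt_om \<omega> pI pJ n' * z_om \<omega> \<rho>i \<rho>j n') = N / Nt"
  proof -
    have "(\<Sum>n'. pt_om \<omega> pI pJ n' * z_om \<omega> \<rho>i \<rho>j n') = (\<Sum>k. a k * z k / Nt)"
      by (simp add: pt_om_def a_def z_def Nt_def)
    also have "\<dots> = (\<Sum>k. a k * z k) / Nt" using suminf_divide[OF sumaz] by simp
    finally show ?thesis using N_eq by simp
  qed
  define m where "m = min (fsd pI \<rho>i n x) (fsd pJ \<rho>j n x)"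
  define F where "F = f_om \<omega> pI pJ \<rho>i \<rho>j n x"
  have Fpos: "F > 0" using assms(7) by (simp add: F_def)
  have ftF: "ft_om \<omega> pI pJ \<rho>i \<rho>j n x = F * (N / Nt / z n)"
    using ft_eq f_eq2 Npos Ntpos zn by (simp add: F_def field_simps)
  have part1: "N / Nt / z n < m / F \<Longrightarrow> ft_om \<omega> pI pJ \<rho>i \<rho>j n x < m"
    using Fpos ftF by (simp add: field_simps)
  have fact_pw: "pw (fact n) (1 - \<omega>) * pw (fact n) \<omega> = (fact n :: real)"
  proof -
    have fp: "(fact n :: real) > 0" by simp
    show ?thesis
      by (cases "\<omega> = 0"; cases "\<omega> = 1") (use fp in \<open>auto simp: pw_def simp flip: powr_add\<close>)
  qed
  have "m \<le> pw (fsd pI \<rho>i n x) (1 - \<omega>) * pw (fsd pJ \<rho>j n x) \<omega>"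
    unfolding m_def fsd_def using ri rj assms(3,4) by (intro pw_min) auto
  also have "\<dots> = a n * b * fact n"
  proof -
    have "pw (fsd pI \<rho>i n x) (1 - \<omega>) = pw (pmf pI n) (1 - \<omega>) * pw (fact n) (1 - \<omega>) * pw (\<rho>i n x) (1 - \<omega>)"
      unfolding fsd_def using ri by (simp add: pw_mult)
    moreover have "pw (fsd pJ \<rho>j n x) \<omega> = pw (pmf pJ n) \<omega> * pw (fact n) \<omega> * pw (\<rho>j n x) \<omega>"
      unfolding fsd_def using rj by (simp add: pw_mult)
    ultimately show ?thesis using fact_pw by (simp add: a_def b_def algebra_simps)
  qed
  also have "\<dots> \<le> F"
  proof -
    have "0 \<le> a n * b * fact n" using a0 by (simp add: b_def pw_nonneg)
    hence "a n * b * fact n * N \<le> a n * b * fact n * 1"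
      using N_le_Nt Nt_le by (intro mult_left_mono) auto
    hence "a n * b * fact n \<le> a n * b * fact n / N" using Npos by (simp add: le_divide_eq mult.commute)
    thus ?thesis using f_eq2 by (simp add: F_def)
  qed
  finally have "m / F \<le> 1" using Fpos by simp
  thus ?thesis using part1 E_eq by (simp add: m_def F_def z_def)
qed

end
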